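(* For every $\alpha\in(m,M)$, where $m=\inf_{n\ge1}b_n$ and $M=\sup_{n\ge1}b_n$, the limit $\lim_{x\to+\infty}\frac{D(x,\alpha)}{x}$ does not exist, where $D(x,\alpha)=\#\{n\in\mathbb Z:1\le n\le x,\ b_n\le\alpha\}$. That is, $(b_n)$ has no cumulative distribution function at any point of $(m,M)$.
   Context: Fix integers $p\ge 3$ and $2\le s<p$, and a set $A\subset\{0,1,\dots,p-1\}$ with $\#A=s$. Let $h:\{0,1,\dots,s-1\}\to A$ be the unique strictly increasing bijection. For a positive integer $n$ with base-$s$ expansion $n=\sum_{i=0}^k\varepsilon_i s^i$ ($\varepsilon_i\in\{0,\dots,s-1\}$, $\varepsilon_k\ne 0$), put $a_n=\sum_{i=0}^k h(\varepsilon_i)p^i$. Let $b_n=a_n/n^{\log_s p}$ for $n\ge1$. *)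

theory Defs
  imports "HOL-Analysis.Analysis"
begin

definition hA :: "nat set \<Rightarrow> nat \<Rightarrow> nat" where
  "hA A j = sorted_list_of_set A ! j"

definition digit :: "nat \<Rightarrow> nat \<Rightarrow> nat \<Rightarrow> nat" where
  "digit s n i = (n div s ^ i) mod s"

text \<open>a_n = sum_{i=0}^k h(eps_i) p^i, where k is the index of the leading
  digit, i.e. the digit positions are exactly the i with s^i \<le> n (n \<ge> 1).\<close>
definition aseq :: "nat \<Rightarrow> nat \<Rightarrow> nat set \<Rightarrow> nat \<Rightarrow> nat" where
  "aseq p s A n = (\<Sum>i\<in>{i. s ^ i \<le> n}. hA A (digit s n i) * p ^ i)"

definition bseq :: "nat \<Rightarrow> nat \<Rightarrow> nat set \<Rightarrow> nat \<Rightarrow> real" where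
  "bseq p s A n = real (aseq p s A n) / real n powr (ln (real p) / ln (real s))"

definition Dcount :: "nat \<Rightarrow> nat \<Rightarrow> nat set \<Rightarrow> real \<Rightarrow> real \<Rightarrow> nat" where
  "Dcount p s A x \<alpha> = card {n::nat. 1 \<le> n \<and> real n \<le> x \<and> bseq p s A n \<le> \<alpha>}"

end

theory Submission
  imports Defs
begin


lemma hA_lt:
  assumes "A \<subseteq> {0..<p}" "card A = s" "j < s"
  shows "hA A j < p"
proof -
  have fin: "finite A" using assms(1) finite_subset by blast
  have "hA A j \<in> A" unfolding hA_def
    using assms fin by (metis nth_mem length_sorted_list_of_set set_sorted_list_of_set)
  then show ?thesis using assms(1) by auto
qed

lemma hA_mono:
  assumes "A \<subseteq> {0..<p}" "card A = s" "i < j" "j < s"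
  shows "hA A i < hA A j"
proof -
  have fin: "finite A" using assms(1) finite_subset by blast
  show ?thesis unfolding hA_def
    using sorted_wrt_nth_less[OF strict_sorted_list_of_set[of A]] assms fin
    by (simp add: length_sorted_list_of_set)
qed

lemma finite_digits: "2 \<le> s \<Longrightarrow> finite {i. s ^ i \<le> (n::nat)}"
proof -
  assume s: "2 \<le> s"
  have "{i. s ^ i \<le> n} \<subseteq> {..n}"
  proof
    fix i assume "i \<in> {i. s ^ i \<le> n}"
    moreover have "i < s ^ i" using s by (simp add: less_exp order_less_le_trans[OF less_exp] power_mono)
    ultimately show "i \<in> {..n}" by simp
  qed
  then show ?thesis using finite_subset by blast
qed

lemma aseq_0: "2 \<le> s \<Longrightarrow> aseq p s A 0 = 0"
  unfolding aseq_def by simp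

lemma aseq_digit: "1 \<le> j \<Longrightarrow> j < s \<Longrightarrow> aseq p s A j = hA A j"
proof -
  assume j: "1 \<le> j" "j < s"
  have "{i. s ^ i \<le> j} = {0}"
  proof (auto simp: j)
    fix i assume "s ^ i \<le> j"
    show "i = 0"
    proof (rule ccontr)
      assume "i \<noteq> 0"
      then have "s \<le> s ^ i" using j by (simp add: self_le_power)
      then show False using \<open>s ^ i \<le> j\<close> j by simp
    qed
  qed (use j in simp)
  then show ?thesis unfolding aseq_def digit_def using j by simp
qed

lemma aseq_rec:
  assumes s: "2 \<le> s" and q: "1 \<le> q" and j: "j < s"
  shows "aseq p s A (s * q + j) = p * aseq p s A q + hA A j"
proof -
  have set: "{i. s ^ i \<le> s * q + j} = insert 0 (Suc ` {i. s ^ i \<le> q})"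
  proof (rule set_eqI)
    fix i
    have key: "s * s ^ k \<le> s * q + j \<longleftrightarrow> s ^ k \<le> q" for k
    proof
      assume "s * s ^ k \<le> s * q + j"
      then have "(s * s ^ k) div s \<le> (s * q + j) div s" by (rule div_le_mono)
      then show "s ^ k \<le> q" using s j by simp
    qed (use s in \<open>simp add: add_increasing2\<close>)
    show "i \<in> {i. s ^ i \<le> s * q + j} \<longleftrightarrow> i \<in> insert 0 (Suc ` {i. s ^ i \<le> q})"
      using q s key by (cases i) (auto simp: add_increasing2 order_trans[OF _ mult_le_mono2])
  qed
  have d0: "digit s (s * q + j) 0 = j" unfolding digit_def using j by simp
  have dS: "digit s (s * q + j) (Suc i) = digit s q i" for i
  proof -
    have "(s * q + j) div s ^ Suc i = ((s * q + j) div s) div s ^ i"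
      by (simp add: div_mult2_eq mult.commute)
    also have "(s * q + j) div s = q" using j s by simp
    finally show ?thesis unfolding digit_def by simp
  qed
  have "aseq p s A (s * q + j) = hA A j + (\<Sum>i\<in>Suc ` {i. s ^ i \<le> q}. hA A (digit s (s * q + j) i) * p ^ i)"
    unfolding aseq_def set using finite_digits[OF s] d0 by (simp)
  also have "\<dots> = hA A j + (\<Sum>i\<in>{i. s ^ i \<le> q}. hA A (digit s q i) * p ^ Suc i)"
    by (simp add: sum.reindex dS)
  also have "\<dots> = p * aseq p s A q + hA A j"
    unfolding aseq_def by (simp add: sum_distrib_left mult.assoc mult.left_commute)
  finally show ?thesis .
qed

locale setup_ctx =
  fixes p s :: nat and A :: "nat set"
  assumes s2: "2 \<le> s" and sp: "s < p" and Asub: "A \<subseteq> {0..<p}" and cardA: "card A = s"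
begin

abbreviation "a \<equiv> aseq p s A"

lemma hlt: "j < s \<Longrightarrow> hA A j < p" using hA_lt[OF Asub cardA] .
lemma hmono: "i < j \<Longrightarrow> j < s \<Longrightarrow> hA A i < hA A j" using hA_mono[OF Asub cardA] .

lemma split_div: "s * (n div s) + n mod s = n" by simp

lemma rec_le: "j < s \<Longrightarrow> a (s * q + j) \<le> p * a q + hA A j"
proof (cases "q = 0")
  case True
  assume j: "j < s"
  show ?thesis
  proof (cases "j = 0")
    case True then show ?thesis using \<open>q = 0\<close> aseq_0[OF s2] by simp
  next
    case False then show ?thesis using \<open>q = 0\<close> aseq_digit[of j s] j by simp
  qed
next
  case False
  assume j: "j < s"
  then show ?thesis using aseq_rec[OF s2, of q j] False by simp
qed

lemma block_upper: "r < s ^ k \<Longrightarrow> a (s ^ k * N + r) < p ^ k * (a N + 1)"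
proof (induction k arbitrary: r)
  case 0 then show ?case by simp
next
  case (Suc k)
  define q where "q = s ^ k * N + r div s"
  have rs: "r div s < s ^ k" using Suc.prems s2
    by (simp add: div_less_iff_less_mult mult.commute)
  have eq: "s ^ Suc k * N + r = s * q + r mod s"
    unfolding q_def by (simp add: algebra_simps)
  have jl: "r mod s < s" using s2 by simp
  have IH: "a q < p ^ k * (a N + 1)" unfolding q_def using Suc.IH[OF rs] .
  have "a (s * q + r mod s) \<le> p * a q + hA A (r mod s)" by (rule rec_le[OF jl])
  also have "\<dots> < p * a q + p" using hlt[OF jl] by simp
  also have "\<dots> = p * (a q + 1)" by simp
  also have "\<dots> \<le> p * (p ^ k * (a N + 1))" using IH by (intro mult_le_mono2) simp
  also have "\<dots> = p ^ Suc k * (a N + 1)" by (simp add: algebra_simps)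
  finally show ?case using eq by metis
qed

lemma block_lower: "1 \<le> N \<Longrightarrow> r < s ^ k \<Longrightarrow> p ^ k * a N \<le> a (s ^ k * N + r)"
proof (induction k arbitrary: r)
  case 0 then show ?case by simp
next
  case (Suc k)
  define q where "q = s ^ k * N + r div s"
  have rs: "r div s < s ^ k" using Suc.prems s2
    by (simp add: div_less_iff_less_mult mult.commute)
  have eq: "s ^ Suc k * N + r = s * q + r mod s"
    unfolding q_def by (simp add: algebra_simps)
  have jl: "r mod s < s" using s2 by simp
  have q1: "1 \<le> q" unfolding q_def using Suc.prems s2
    by (metis add_leE le_add1 mult_le_mono one_le_power order_trans le_trans nat_le_linear mult_1 dual_order.trans one_le_numeral)
  have IH: "p ^ k * a N \<le> a q" unfolding q_def using Suc.IH[OF Suc.prems(1) rs] .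
  have "p ^ Suc k * a N = p * (p ^ k * a N)" by simp
  also have "\<dots> \<le> p * a q" using IH by simp
  also have "\<dots> \<le> a (s * q + r mod s)" using aseq_rec[OF s2 q1 jl] by simp
  finally show ?case using eq by simp
qed

lemma a_strict: "a n < a (Suc n)"
proof (induction n rule: less_induct)
  case (less n)
  show ?case
  proof (cases "Suc n < s")
    case True
    have "a n \<le> hA A n"
      using aseq_0[OF s2] aseq_digit[of n s] True by (cases "n = 0") auto
    also have "\<dots> < hA A (Suc n)" using hmono True by simp
    also have "\<dots> = a (Suc n)" using aseq_digit[of "Suc n" s] True by simp
    finally show ?thesis .
  next
    case False
    define q where "q = n div s"
    define j where "j = n mod s"
    have n: "n = s * q + j" unfolding q_def j_def by simp
    have jl: "j < s" unfolding j_def using s2 by simp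
    show ?thesis
    proof (cases "Suc j < s")
      case True
      have q1: "1 \<le> q"
      proof (rule ccontr)
        assume "\<not> 1 \<le> q" then have "q = 0" by simp
        then show False using n True False by simp
      qed
      have "a n = p * a q + hA A j" using aseq_rec[OF s2 q1 jl] n by simp
      also have "\<dots> < p * a q + hA A (Suc j)" using hmono True by simp
      also have "\<dots> = a (Suc n)" using aseq_rec[OF s2 q1 True] n by simp
      finally show ?thesis .
    next
      case False
      then have jj: "Suc j = s" using jl by simp
      have ql: "q < n" unfolding q_def using s2 \<open>\<not> Suc n < s\<close> by simp
      have IH: "a q < a (Suc q)" using less.IH[OF ql] .
      have sn: "Suc n = s * Suc q + 0" using n jj by simp
      have "a n \<le> p * a q + hA A j" using rec_le[OF jl] n by simp
      also have "\<dots> < p * a q + p" using hlt[OF jl] by simp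
      also have "\<dots> = p * (a q + 1)" by simp
      also have "\<dots> \<le> p * a (Suc q)" using IH by (intro mult_le_mono2) simp
      also have "\<dots> \<le> a (Suc n)" using aseq_rec[of s "Suc q" 0 p A] s2 sn by simp
      finally show ?thesis .
    qed
  qed
qed

end




lemma dens:
  fixes T :: "nat \<Rightarrow> nat" and s N :: nat and c L :: real
  assumes lim: "(\<lambda>X. real (T X) / real X) \<longlonglongrightarrow> L" and s: "2 \<le> s" and N: "1 \<le> N"
    and T0: "T 0 = 0"
    and step: "\<And>k. real (T (s^k*(N+1) - 1)) = real (T (s^k*N - 1)) + c * real s ^ k"
  shows "L = c"
proof -
  define g where "g X = real (T X) / real X" for X
  define u where "u k = s^k*N - 1" for k
  define v where "v k = s^k*(N+1) - 1" for k
  have spos: "1 \<le> s ^ k" for k using s by simp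
  have su: "strict_mono u" unfolding strict_mono_Suc_iff u_def
  proof
    fix k
    have "s ^ k * N < s * (s ^ k * N)" using s N spos[of k] by (intro n_less_m_mult_n) (auto simp: one_le_mult_iff)
    then have "s ^ k * N < s ^ Suc k * N" by (metis mult.assoc power_Suc)
    moreover have "1 \<le> s ^ k * N" using spos[of k] N by (simp add: one_le_mult_iff)
    ultimately show "s ^ k * N - 1 < s ^ Suc k * N - 1" by linarith
  qed
  have sv: "strict_mono v" unfolding strict_mono_Suc_iff v_def
  proof
    fix k
    have "s ^ k * (N+1) < s * (s ^ k * (N+1))" by (rule n_less_m_mult_n) (use s in auto)
    then have "s ^ k * (N+1) < s ^ Suc k * (N+1)" by (metis mult.assoc power_Suc)
    moreover have "1 \<le> s ^ k * (N+1)" using spos[of k] by (simp add: one_le_mult_iff)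
    ultimately show "s ^ k * (N+1) - 1 < s ^ Suc k * (N+1) - 1" by linarith
  qed
  have gu: "(\<lambda>k. g (u k)) \<longlonglongrightarrow> L" using LIMSEQ_subseq_LIMSEQ[OF lim su] unfolding g_def o_def .
  have gv: "(\<lambda>k. g (v k)) \<longlonglongrightarrow> L" using LIMSEQ_subseq_LIMSEQ[OF lim sv] unfolding g_def o_def .
  have sk: "real s ^ k > 0" for k using s by simp
  have ru: "real (u k) / real s ^ k = real N - inverse (real s ^ k)" for k
  proof -
    have "1 \<le> s ^ k * N" using spos[of k] N by (simp add: one_le_mult_iff)
    then have "real (u k) = real s ^ k * real N - 1" unfolding u_def by (simp add: of_nat_diff)
    then show ?thesis using sk[of k] by (simp add: field_simps)
  qed
  have rv: "real (v k) / real s ^ k = (real N + 1) - inverse (real s ^ k)" for k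
  proof -
    have "1 \<le> s ^ k * (N+1)" using spos[of k] by (simp add: one_le_mult_iff)
    then have "real (v k) = real s ^ k * (real N + 1) - 1" unfolding v_def by (simp add: of_nat_diff algebra_simps)
    then show ?thesis using sk[of k] by (simp add: field_simps)
  qed
  have inv0: "(\<lambda>k. inverse (real s ^ k)) \<longlonglongrightarrow> 0" using s by (intro LIMSEQ_inverse_realpow_zero) simp
  have gx: "g X * real X = real (T X)" for X unfolding g_def using T0 by (cases "X = 0") auto
  have ident: "c = g (v k) * (real (v k) / real s ^ k) - g (u k) * (real (u k) / real s ^ k)" for k
  proof -
    have "g (v k) * (real (v k) / real s ^ k) - g (u k) * (real (u k) / real s ^ k)
        = (real (T (v k)) - real (T (u k))) / real s ^ k"
      using gx[of "v k"] gx[of "u k"] by (simp add: diff_divide_distrib mult.assoc[symmetric] times_divide_eq_right)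
    also have "\<dots> = c" using step[of k] sk[of k] unfolding u_def v_def by simp
    finally show ?thesis by simp
  qed
  have "(\<lambda>k. g (v k) * (real (v k) / real s ^ k) - g (u k) * (real (u k) / real s ^ k))
        \<longlonglongrightarrow> L * ((real N + 1) - 0) - L * (real N - 0)"
    unfolding ru rv by (intro tendsto_intros gu gv inv0)
  moreover have "(\<lambda>k. g (v k) * (real (v k) / real s ^ k) - g (u k) * (real (u k) / real s ^ k)) = (\<lambda>k. c)"
    using ident by (intro ext) (rule sym)
  moreover have "L * ((real N + 1) - 0) - L * (real N - 0) = L" by (simp add: algebra_simps)
  ultimately have "(\<lambda>k. c) \<longlonglongrightarrow> L" by simp
  then show ?thesis using LIMSEQ_unique[OF _ tendsto_const] by metis
qed




context setup_ctx
begin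

abbreviation "gam \<equiv> ln (real p) / ln (real s)"
abbreviation "b \<equiv> bseq p s A"

lemma spow: "real s powr gam = real p"
proof -
  have "ln (real s) > 0" using s2 by simp
  moreover have "real p > 0" using sp by simp
  ultimately show ?thesis using s2 by (simp add: powr_def)
qed

lemma spk: "0 \<le> x \<Longrightarrow> (real s ^ k * x) powr gam = real p ^ k * x powr gam"
proof -
  assume x: "0 \<le> x"
  have s0: "real s > 0" using s2 by simp
  have "(real s ^ k) powr gam = (real s powr real k) powr gam" using powr_realpow[OF s0] by simp
  also have "\<dots> = real s powr (real k * gam)" by (simp add: powr_powr)
  also have "\<dots> = (real s powr gam) ^ k" using powr_power[of "real s" gam k] s0 by simp
  also have "\<dots> = real p ^ k" using spow by simp
  finally have "(real s ^ k) powr gam = real p ^ k" .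
  then show ?thesis using x s0 by (simp add: powr_mult)
qed

lemma gam_nonneg: "0 \<le> gam"
  using s2 sp by (intro divide_nonneg_pos) auto

lemma bseq_alt: "b n = real (a n) / real n powr gam" unfolding bseq_def by simp

lemma lowblock:
  assumes n0: "1 \<le> n0" and lt: "b n0 < \<alpha>"
  shows "\<exists>N\<ge>1. \<forall>k r. r < s ^ k \<longrightarrow> b (s ^ k * N + r) \<le> \<alpha>"
proof -
  define f where "f m = real (a n0) / (real n0 - inverse (real s ^ m)) powr gam" for m
  have inv0: "(\<lambda>k. inverse (real s ^ k)) \<longlonglongrightarrow> 0" using s2 by (intro LIMSEQ_inverse_realpow_zero) simp
  have "(\<lambda>m. (real n0 - inverse (real s ^ m)) powr gam) \<longlonglongrightarrow> (real n0 - 0) powr gam"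
    using n0 by (intro tendsto_powr tendsto_intros inv0) auto
  then have "f \<longlonglongrightarrow> real (a n0) / (real n0 - 0) powr gam"
    unfolding f_def using n0 by (intro tendsto_intros inv0) auto
  then have "f \<longlonglongrightarrow> b n0" by (simp add: bseq_alt)
  from order_tendstoD(2)[OF this lt] obtain M where M: "\<And>m. m \<ge> M \<Longrightarrow> f m < \<alpha>"
    by (auto simp: eventually_sequentially)
  define m where "m = Suc M"
  have fm: "f m < \<alpha>" using M m_def by simp
  have sm2: "2 \<le> s ^ m"
  proof -
    have "1 \<le> s ^ M" using s2 by simp
    then have h: "s * 1 \<le> s * s ^ M" by (rule mult_le_mono2)
    have "s ^ m = s * s ^ M" unfolding m_def by simp
    then show ?thesis using h s2 by linarith
  qed
  define N where "N = s ^ m * n0 - 1"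
  have h: "s ^ m * 1 \<le> s ^ m * n0" using n0 by (rule mult_le_mono2)
  have smn: "2 \<le> s ^ m * n0" using sm2 h by linarith
  have N1: "1 \<le> N" unfolding N_def using smn by simp
  have Neq: "N = s ^ m * (n0 - 1) + (s ^ m - 1)" unfolding N_def using n0 sm2
    by (simp add: diff_mult_distrib2)
  have l1: "a N < p ^ m * (a (n0 - 1) + 1)" unfolding Neq using sm2 by (intro block_upper) simp
  have "a (n0 - 1) < a (Suc (n0 - 1))" by (rule a_strict)
  then have "a (n0 - 1) + 1 \<le> a n0" using n0 by simp
  then have "p ^ m * (a (n0 - 1) + 1) \<le> p ^ m * a n0" by (rule mult_le_mono2)
  with l1 have aN: "a N + 1 \<le> p ^ m * a n0" by simp
  have sk: "real s ^ k > 0" for k using s2 by simp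
  have realN: "real N = real s ^ m * (real n0 - inverse (real s ^ m))"
  proof -
    have "real N = real (s ^ m * n0) - real 1" unfolding N_def using smn by (intro of_nat_diff) linarith
    then have hN: "real N = real s ^ m * real n0 - 1" by simp
    have "real s ^ m * inverse (real s ^ m) = 1" using sk[of m] by simp
    then show ?thesis using hN by (simp add: right_diff_distrib)
  qed
  have Xpos: "real n0 - inverse (real s ^ m) > 0"
  proof -
    have "real (2::nat) \<le> real (s ^ m)" using sm2 by (simp only: of_nat_le_iff)
    then have "2 \<le> real s ^ m" by simp
    then have "inverse (real s ^ m) \<le> inverse 2"
      by (intro le_imp_inverse_le) auto
    then show ?thesis using n0 by simp
  qed
  have "b (s ^ k * N + r) \<le> \<alpha>" if r: "r < s ^ k" for k r
  proof -
    define e where "e = s ^ k * N + r"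
    define X where "X = real n0 - inverse (real s ^ m)"
    have "a e < p ^ k * (a N + 1)" unfolding e_def by (rule block_upper[OF r])
    also have "\<dots> \<le> p ^ k * (p ^ m * a n0)" using aN by (rule mult_le_mono2)
    finally have "a e \<le> p ^ k * (p ^ m * a n0)" by simp
    then have "real (a e) \<le> real (p ^ k * (p ^ m * a n0))" by (simp only: of_nat_le_iff)
    then have ae: "real (a e) \<le> real p ^ k * real p ^ m * real (a n0)" by (simp add: mult.assoc)
    have "real s ^ k * (real s ^ m * X) \<le> real e"
      unfolding e_def X_def realN[symmetric] by simp
    then have "(real s ^ k * (real s ^ m * X)) powr gam \<le> real e powr gam"
      using Xpos sk gam_nonneg by (intro powr_mono2) (auto simp: X_def)
    then have ep: "real p ^ k * real p ^ m * X powr gam \<le> real e powr gam"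
      using Xpos by (simp add: spk X_def mult.assoc)
    have pos: "0 < real p ^ k * real p ^ m * X powr gam" using Xpos sp by (simp add: X_def)
    have "b e = real (a e) / real e powr gam" by (rule bseq_alt)
    also have "\<dots> \<le> (real p ^ k * real p ^ m * real (a n0)) / (real p ^ k * real p ^ m * X powr gam)"
      by (rule frac_le) (use ae ep pos in auto)
    also have "\<dots> = f m" unfolding f_def X_def using sp by simp
    finally show ?thesis using fm e_def by simp
  qed
  then show ?thesis using N1 by blast
qed

lemma highblock:
  assumes n1: "1 \<le> n1" and gt: "\<alpha> < b n1"
  shows "\<exists>N\<ge>1. \<forall>k r. r < s ^ k \<longrightarrow> \<alpha> < b (s ^ k * N + r)"
proof -
  define f where "f m = real (a n1) / (real n1 + inverse (real s ^ m)) powr gam" for m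
  have inv0: "(\<lambda>k. inverse (real s ^ k)) \<longlonglongrightarrow> 0" using s2 by (intro LIMSEQ_inverse_realpow_zero) simp
  have "(\<lambda>m. (real n1 + inverse (real s ^ m)) powr gam) \<longlonglongrightarrow> (real n1 + 0) powr gam"
    using n1 by (intro tendsto_powr tendsto_intros inv0) auto
  then have "f \<longlonglongrightarrow> real (a n1) / (real n1 + 0) powr gam"
    unfolding f_def using n1 by (intro tendsto_intros inv0) auto
  then have "f \<longlonglongrightarrow> b n1" by (simp add: bseq_alt)
  from order_tendstoD(1)[OF this gt] obtain m where fm: "\<alpha> < f m"
    by (auto simp: eventually_sequentially)
  define N where "N = s ^ m * n1"
  have sk: "real s ^ k > 0" for k using s2 by simp
  have N1: "1 \<le> N" unfolding N_def using n1 s2 by (simp add: one_le_mult_iff)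
  have aN: "p ^ m * a n1 \<le> a N" unfolding N_def using block_lower[OF n1, of 0 m] s2 by simp
  have Ypos: "real n1 + inverse (real s ^ m) > 0" using n1 sk[of m] by (simp add: add_pos_pos)
  have "\<alpha> < b (s ^ k * N + r)" if r: "r < s ^ k" for k r
  proof -
    define e where "e = s ^ k * N + r"
    define Y where "Y = real n1 + inverse (real s ^ m)"
    have "p ^ k * (p ^ m * a n1) \<le> p ^ k * a N" using aN by (rule mult_le_mono2)
    also have "\<dots> \<le> a e" unfolding e_def by (rule block_lower[OF N1 r])
    finally have "real (p ^ k * (p ^ m * a n1)) \<le> real (a e)" by (simp only: of_nat_le_iff)
    then have ae: "real p ^ k * real p ^ m * real (a n1) \<le> real (a e)" by (simp add: mult.assoc)
    have e1: "1 \<le> e" unfolding e_def using N1 s2 by (simp add: one_le_mult_iff add_increasing2)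
    have "e \<le> s ^ k * N + s ^ k" unfolding e_def using r by simp
    then have "real e \<le> real (s ^ k * N + s ^ k)" by (simp only: of_nat_le_iff)
    then have "real e \<le> real s ^ k * real N + real s ^ k" by simp
    also have "\<dots> = real s ^ k * (real s ^ m * Y)" unfolding N_def Y_def using sk[of m]
      by (simp add: field_simps)
    finally have "real e powr gam \<le> (real s ^ k * (real s ^ m * Y)) powr gam"
      using e1 gam_nonneg by (intro powr_mono2) auto
    then have ep: "real e powr gam \<le> real p ^ k * real p ^ m * Y powr gam"
      using Ypos by (simp add: spk Y_def mult.assoc)
    have pos: "0 < real e powr gam" using e1 by simp
    have "f m = (real p ^ k * real p ^ m * real (a n1)) / (real p ^ k * real p ^ m * Y powr gam)"
      unfolding f_def Y_def using sp by simp
    also have "\<dots> \<le> real (a e) / real e powr gam"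
      by (rule frac_le) (use ae ep pos in auto)
    also have "\<dots> = b e" by (rule bseq_alt[symmetric])
    finally show ?thesis using fm e_def by simp
  qed
  then show ?thesis using N1 by blast
qed

end




context setup_ctx
begin

definition TT :: "real \<Rightarrow> nat \<Rightarrow> nat" where
  "TT \<alpha> X = card {n. 1 \<le> n \<and> n \<le> X \<and> b n \<le> \<alpha>}"

lemma TT_D: "Dcount p s A (real X) \<alpha> = TT \<alpha> X"
  unfolding Dcount_def TT_def by simp

lemma TT_split:
  assumes "u \<le> v"
  shows "TT \<alpha> v = TT \<alpha> u + card {n. u < n \<and> n \<le> v \<and> 1 \<le> n \<and> b n \<le> \<alpha>}"
proof -
  have eq: "{n. 1 \<le> n \<and> n \<le> v \<and> b n \<le> \<alpha>} =
      {n. 1 \<le> n \<and> n \<le> u \<and> b n \<le> \<alpha>} \<union> {n. u < n \<and> n \<le> v \<and> 1 \<le> n \<and> b n \<le> \<alpha>}"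
    using assms by auto
  have f1: "finite {n. 1 \<le> n \<and> n \<le> u \<and> b n \<le> \<alpha>}" by (rule finite_subset[of _ "{..u}"]) auto
  have f2: "finite {n. u < n \<and> n \<le> v \<and> 1 \<le> n \<and> b n \<le> \<alpha>}" by (rule finite_subset[of _ "{..v}"]) auto
  show ?thesis unfolding TT_def eq
    by (rule card_Un_disjoint[OF f1 f2]) auto
qed

lemma block_iff0:
  fixes x y n :: nat
  assumes "1 \<le> x" "1 \<le> y"
  shows "(x - 1 < n \<and> n \<le> x + y - 1) \<longleftrightarrow> (\<exists>r<y. n = x + r)"
proof
  assume H: "x - 1 < n \<and> n \<le> x + y - 1"
  show "\<exists>r<y. n = x + r"
  proof (intro exI conjI)
    show "n - x < y" using H assms by linarith
    show "n = x + (n - x)" using H assms by linarith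
  qed
next
  assume "\<exists>r<y. n = x + r"
  then obtain r where "r < y" "n = x + r" by blast
  then show "x - 1 < n \<and> n \<le> x + y - 1" using assms by linarith
qed

lemma block_iff:
  assumes N: "1 \<le> N"
  shows "(s ^ k * N - 1 < n \<and> n \<le> s ^ k * (N + 1) - 1) \<longleftrightarrow> (\<exists>r<s ^ k. n = s ^ k * N + r)"
proof -
  have "1 \<le> s ^ k * N" using N s2 by (simp add: one_le_mult_iff)
  moreover have "s ^ k * (N + 1) = s ^ k * N + s ^ k" by (simp add: algebra_simps)
  moreover have "1 \<le> s ^ k" using s2 by simp
  ultimately show ?thesis using block_iff0[of "s ^ k * N" "s ^ k" n] by (simp add: add.commute)
qed

lemma step_low:
  assumes N: "1 \<le> N" and blk: "\<forall>k r. r < s ^ k \<longrightarrow> b (s ^ k * N + r) \<le> \<alpha>"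
  shows "real (TT \<alpha> (s^k*(N+1) - 1)) = real (TT \<alpha> (s^k*N - 1)) + 1 * real s ^ k"
proof -
  have le: "s^k*N - 1 \<le> s^k*(N+1) - 1" by (intro diff_le_mono mult_le_mono2) simp
  have "{n. s^k*N - 1 < n \<and> n \<le> s^k*(N+1) - 1 \<and> 1 \<le> n \<and> b n \<le> \<alpha>} = {s^k*N - 1<..s^k*(N+1) - 1}"
  proof (rule set_eqI)
    fix n
    show "n \<in> {n. s^k*N - 1 < n \<and> n \<le> s^k*(N+1) - 1 \<and> 1 \<le> n \<and> b n \<le> \<alpha>} \<longleftrightarrow> n \<in> {s^k*N - 1<..s^k*(N+1) - 1}"
      using block_iff[OF N, of k n] blk by auto
  qed
  moreover have "card {s^k*N - 1<..s^k*(N+1) - 1} = s ^ k"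
  proof -
    have "1 \<le> s ^ k * N" using N s2 by (simp add: one_le_mult_iff)
    moreover have "s ^ k * (N + 1) = s ^ k * N + s ^ k" by (simp add: algebra_simps)
    ultimately show ?thesis by simp
  qed
  ultimately show ?thesis using TT_split[OF le, of \<alpha>] by simp
qed

lemma step_high:
  assumes N: "1 \<le> N" and blk: "\<forall>k r. r < s ^ k \<longrightarrow> \<alpha> < b (s ^ k * N + r)"
  shows "real (TT \<alpha> (s^k*(N+1) - 1)) = real (TT \<alpha> (s^k*N - 1)) + 0 * real s ^ k"
proof -
  have le: "s^k*N - 1 \<le> s^k*(N+1) - 1" by (intro diff_le_mono mult_le_mono2) simp
  have "{n. s^k*N - 1 < n \<and> n \<le> s^k*(N+1) - 1 \<and> 1 \<le> n \<and> b n \<le> \<alpha>} = {}"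
    
  proof (rule ccontr)
    assume "{n. s^k*N - 1 < n \<and> n \<le> s^k*(N+1) - 1 \<and> 1 \<le> n \<and> b n \<le> \<alpha>} \<noteq> {}"
    then obtain n where n: "s^k*N - 1 < n" "n \<le> s^k*(N+1) - 1" "b n \<le> \<alpha>" by blast
    then obtain r where "r < s ^ k" "n = s ^ k * N + r" using block_iff[OF N, of k n] by blast
    then show False using blk n(3) by fastforce
  qed
  then show ?thesis using TT_split[OF le, of \<alpha>] by simp
qed

end

theorem theorem3:
  fixes p s :: nat and A :: "nat set" and \<alpha> :: real
  assumes "p \<ge> 3" and "2 \<le> s" and "s < p"
    and "A \<subseteq> {0..<p}" and "card A = s"
    and "(INF n\<in>{1..}. bseq p s A n) < \<alpha>"
    and "\<alpha> < (SUP n\<in>{1..}. bseq p s A n)"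
  shows "\<not> (\<exists>L. ((\<lambda>x. real (Dcount p s A x \<alpha>) / x) \<longlongrightarrow> L) at_top)"
proof
  interpret setup_ctx p s A using assms by unfold_locales auto
  assume "\<exists>L. ((\<lambda>x. real (Dcount p s A x \<alpha>) / x) \<longlongrightarrow> L) at_top"
  then obtain L where lim: "((\<lambda>x. real (Dcount p s A x \<alpha>) / x) \<longlongrightarrow> L) at_top" by blast
  have seq: "(\<lambda>X. real (TT \<alpha> X) / real X) \<longlonglongrightarrow> L"
    using filterlim_compose[OF lim filterlim_real_sequentially] by (simp add: TT_D o_def)
  have T0: "TT \<alpha> 0 = 0" unfolding TT_def by simp
  obtain n0 where n0: "n0 \<in> {1..}" "b n0 < \<alpha>" using cInf_lessD[OF _ assms(6)] by auto
  obtain n1 where n1: "n1 \<in> {1..}" "\<alpha> < b n1" using less_cSupD[OF _ assms(7)] by auto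
  obtain N0 where N0: "1 \<le> N0" "\<forall>k r. r < s ^ k \<longrightarrow> b (s ^ k * N0 + r) \<le> \<alpha>"
    using lowblock[of n0 \<alpha>] n0 by auto
  obtain N1 where N1: "1 \<le> N1" "\<forall>k r. r < s ^ k \<longrightarrow> \<alpha> < b (s ^ k * N1 + r)"
    using highblock[of n1 \<alpha>] n1 by auto
  have "L = 1" using dens[OF seq s2 N0(1) T0 step_low[OF N0]] by simp
  moreover have "L = 0" using dens[OF seq s2 N1(1) T0 step_high[OF N1]] by simp
  ultimately show False by simp
qed


end
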